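(* Let $k\in\mathbb N$, $t\in(0,1)$ and $n\le 2k+2$. Then $A_{n,k,t}^{-1}$ is checkerboard: for all $i,j$, the $(i,j)$ entry of $A_{n,k,t}^{-1}$ is either $0$ or has sign $(-1)^{i-j}$. Equivalently, all minors of $A_{n,k,t}$ of order $n-1$ are nonnegative.
   Context: For $x\in\mathbb R$, $x_+=\max\{x,0\}$. For $k\in\mathbb{N}$ and $t\in(0,1)$, $A_{\infty,k,t}=(A(i,j))_{i,j\ge1}$ is the infinite Toeplitz Hessenberg matrix with $A(i,j)=a_{j-i}$ for $j\ge i$, $A(i+1,i)=1$, and $A(i,j)=0$ for $i\ge j+2$, where $(a_0,a_1,\ldots)$ is the unique sequence for which the leading principal minors satisfy $\det A(\{1,\dots,n\})=t^{(n-k-1)_+}$ for all $n\in\mathbb N$. $A_{n,k,t}$ is the leading principal $n\times n$ submatrix of $A_{\infty,k,t}$ (it is invertible since its determinant is $t^{(n-k-1)_+}>0$). *)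

theory Defs
  imports "Jordan_Normal_Form.Determinant"
begin

definition toeplitz_hess :: "(nat \<Rightarrow> real) \<Rightarrow> nat \<Rightarrow> real mat" where
  "toeplitz_hess a n = mat n n (\<lambda>(i,j). if i \<le> j then a (j - i) else if i = Suc j then 1 else 0)"

text \<open>The unique sequence whose leading principal minors are t^((n-k-1)_+) for all n >= 1
  (natural-number subtraction realises the positive part).\<close>
definition seq_akt :: "nat \<Rightarrow> real \<Rightarrow> nat \<Rightarrow> real" where
  "seq_akt k t = (THE a. \<forall>n\<ge>1. det (toeplitz_hess a n) = t ^ (n - k - 1))"

definition A_nkt :: "nat \<Rightarrow> nat \<Rightarrow> real \<Rightarrow> real mat" where
  "A_nkt n k t = toeplitz_hess (seq_akt k t) n"

end

theory Submission
  imports Defs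
begin



lemma th_carrier[simp]: "toeplitz_hess a n \<in> carrier_mat n n"
  unfolding toeplitz_hess_def by auto

lemma th_dim[simp]: "dim_row (toeplitz_hess a n) = n" "dim_col (toeplitz_hess a n) = n"
  unfolding toeplitz_hess_def by auto

lemma th_index[simp]: "i < n \<Longrightarrow> j < n \<Longrightarrow> toeplitz_hess a n $$ (i,j) =
   (if i \<le> j then a (j - i) else if i = Suc j then 1 else 0)"
  unfolding toeplitz_hess_def by auto

lemma th_del00: "mat_delete (toeplitz_hess a (Suc n)) 0 0 = toeplitz_hess a n"
  by (rule eq_matI) (auto simp: mat_delete_def)

lemma th_del0j: "j \<le> n \<Longrightarrow> det (mat_delete (toeplitz_hess a (Suc n)) 0 j) = det (toeplitz_hess a (n - j))"
proof (induction j arbitrary: n)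
  case 0
  then show ?case by (simp add: th_del00)
next
  case (Suc j)
  then obtain n' where n: "n = Suc n'" by (cases n) auto
  define M where "M = mat_delete (toeplitz_hess a (Suc n)) 0 (Suc j)"
  have M: "M \<in> carrier_mat n n" unfolding M_def by (auto simp: mat_delete_def)
  have col: "i < n \<Longrightarrow> M $$ (i,0) = (if i = 0 then 1 else 0)" for i
    unfolding M_def mat_delete_def using Suc by auto
  have "det M = (\<Sum>i<n. M $$ (i,0) * cofactor M i 0)"
    by (rule laplace_expansion_column[OF M]) (simp add: n)
  also have "\<dots> = (\<Sum>i<n. (if i = 0 then cofactor M 0 0 else 0))"
    by (rule sum.cong) (auto simp: col)
  also have "\<dots> = cofactor M 0 0" using n by simp
  also have "\<dots> = det (mat_delete M 0 0)" by (simp add: cofactor_def)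
  also have "mat_delete M 0 0 = mat_delete (toeplitz_hess a (Suc n')) 0 j"
    unfolding M_def n by (rule eq_matI) (auto simp: mat_delete_def)
  also have "det \<dots> = det (toeplitz_hess a (n' - j))" using Suc n by simp
  finally show ?case unfolding M_def n by simp
qed

lemma th_rec: "det (toeplitz_hess a (Suc n)) = (\<Sum>j\<le>n. (-1)^j * a j * det (toeplitz_hess a (n - j)))"
proof -
  have "det (toeplitz_hess a (Suc n)) = (\<Sum>j<Suc n. toeplitz_hess a (Suc n) $$ (0,j) * cofactor (toeplitz_hess a (Suc n)) 0 j)"
    by (rule laplace_expansion_row) auto
  also have "\<dots> = (\<Sum>j\<le>n. (-1)^j * a j * det (toeplitz_hess a (n - j)))"
    by (rule sum.cong) (auto simp: cofactor_def th_del0j lessThan_Suc_atMost)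
  finally show ?thesis .
qed

definition TT :: "nat \<Rightarrow> real \<Rightarrow> nat \<Rightarrow> real" where "TT k t r = t ^ (r - k - 1)"

function aseq :: "nat \<Rightarrow> real \<Rightarrow> nat \<Rightarrow> real" where
  "aseq k t m = (-1)^m * (TT k t (Suc m) - (\<Sum>j<m. (-1)^j * aseq k t j * TT k t (m - j)))"
  by auto
termination by (relation "measure (\<lambda>(k,t,m). m)") auto

declare aseq.simps[simp del]

lemma det_th_T:
  assumes "\<forall>n\<ge>1. det (toeplitz_hess a n) = t ^ (n - k - 1)"
  shows "det (toeplitz_hess a r) = TT k t r"
  using assms by (cases r) (auto simp: TT_def)

lemma solve:
  assumes P: "\<forall>n\<ge>1. det (toeplitz_hess a n) = t ^ (n - k - 1)"
  shows "a m = (-1)^m * (TT k t (Suc m) - (\<Sum>j<m. (-1)^j * a j * TT k t (m - j)))"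
proof -
  have "TT k t (Suc m) = (\<Sum>j\<le>m. (-1)^j * a j * TT k t (m - j))"
    using th_rec[of a m] det_th_T[OF P] by simp
  also have "\<dots> = (\<Sum>j<m. (-1)^j * a j * TT k t (m - j)) + (-1)^m * a m"
    by (simp add: lessThan_Suc_atMost[symmetric] TT_def)
  finally have "(-1)^m * a m = TT k t (Suc m) - (\<Sum>j<m. (-1)^j * a j * TT k t (m - j))" by simp
  hence "(-1)^m * ((-1)^m * a m) = (-1)^m * (TT k t (Suc m) - (\<Sum>j<m. (-1)^j * a j * TT k t (m - j)))" by simp
  thus ?thesis by (simp flip: mult.assoc power_mult_distrib)
qed

lemma aseq_P: "\<forall>n\<ge>1. det (toeplitz_hess (aseq k t) n) = t ^ (n - k - 1)"
proof -
  have "det (toeplitz_hess (aseq k t) n) = TT k t n" for n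
  proof (induction n rule: less_induct)
    case (less n)
    show ?case
    proof (cases n)
      case 0 then show ?thesis by (simp add: TT_def)
    next
      case (Suc m)
      have "det (toeplitz_hess (aseq k t) n) = (\<Sum>j\<le>m. (-1)^j * aseq k t j * TT k t (m - j))"
        unfolding Suc th_rec by (rule sum.cong) (auto simp: less Suc)
      also have "\<dots> = (\<Sum>j<m. (-1)^j * aseq k t j * TT k t (m - j)) + (-1)^m * aseq k t m"
        by (simp add: lessThan_Suc_atMost[symmetric] TT_def)
      also have "(-1)^m * aseq k t m = TT k t (Suc m) - (\<Sum>j<m. (-1)^j * aseq k t j * TT k t (m - j))"
        by (subst aseq.simps) (simp flip: mult.assoc power_mult_distrib)
      finally show ?thesis using Suc by simp
    qed
  qed
  thus ?thesis by (auto simp: TT_def)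
qed

lemma uniq:
  assumes "\<forall>n\<ge>1. det (toeplitz_hess a n) = t ^ (n - k - 1)"
  shows "a = aseq k t"
proof
  fix m show "a m = aseq k t m"
  proof (induction m rule: less_induct)
    case (less m)
    show ?case
      apply (subst solve[OF assms], subst aseq.simps)
      using less by (auto intro!: sum.cong arg_cong2[where f="(-)"])
  qed
qed

lemma seq_akt_eq: "seq_akt k t = aseq k t"
  unfolding seq_akt_def
  by (rule the_equality) (rule aseq_P, erule uniq)




lemma sum_split_add: "(\<Sum>j<(a::nat)+b. f j) = (\<Sum>j<a. f j) + (\<Sum>i<b. f (a+i)) "
  by (induction b) (auto simp: add.assoc)

definition bb :: "nat \<Rightarrow> real \<Rightarrow> nat \<Rightarrow> real" where
  "bb k t j = (if j = 0 then 1 else if j \<le> k then 0 else if j = Suc k then -(1-t) else (1-t)^2 * t^(j-k-2))"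

lemma F_sum: "(\<Sum>q<r. bb k t (Suc k + q)) = (if r=0 then 0 else -(1-t)*t^(r-1))"
proof (induction r)
  case 0 then show ?case by simp
next
  case (Suc r)
  then show ?case
    by (cases r) (auto simp: bb_def power2_eq_square algebra_simps)
qed

lemma sum_id:
  assumes "m \<le> 2*k+1"
  shows "(\<Sum>j<m. bb k t j * TT k t (m-j)) = TT k t (Suc m) - bb k t m"
proof (cases "m \<le> k")
  case True
  have "(\<Sum>j<m. bb k t j * TT k t (m-j)) = (\<Sum>j<m. if j = 0 then 1 else 0)"
    by (rule sum.cong) (use True in \<open>auto simp: bb_def TT_def\<close>)
  also have "\<dots> = (if m = 0 then 0 else 1)" by simp
  finally show ?thesis using True by (auto simp: bb_def TT_def)
next
  case False
  then obtain p where m: "m = Suc k + p" and p: "p \<le> k" using assms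
  proof -
    show ?thesis using that[of "m - Suc k"] False assms by simp
  qed
  have "(\<Sum>j<m. bb k t j * TT k t (m-j)) = (\<Sum>j<Suc k. bb k t j * TT k t (m-j)) + (\<Sum>q<p. bb k t (Suc k + q) * TT k t (m - (Suc k + q)))"
    unfolding m sum_split_add ..
  also have "(\<Sum>j<Suc k. bb k t j * TT k t (m-j)) = (\<Sum>j<Suc k. if j = 0 then t^p else 0)"
    by (rule sum.cong) (auto simp: bb_def TT_def m)
  also have "\<dots> = t^p" by simp
  also have "(\<Sum>q<p. bb k t (Suc k + q) * TT k t (m - (Suc k + q))) = (\<Sum>q<p. bb k t (Suc k + q))"
    by (rule sum.cong) (use p in \<open>auto simp: TT_def m\<close>)
  also have "\<dots> = (if p=0 then 0 else -(1-t)*t^(p-1))" by (rule F_sum)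
  finally have L: "(\<Sum>j<m. bb k t j * TT k t (m-j)) = t ^ p + (if p = 0 then 0 else - (1 - t) * t ^ (p - 1))" .
  show ?thesis
  proof (cases p)
    case 0 then show ?thesis using L by (simp add: m bb_def TT_def)
  next
    case (Suc q)
    then show ?thesis using L by (simp add: m bb_def TT_def power2_eq_square algebra_simps)
  qed
qed

lemma aseq_val:
  assumes "m \<le> 2*k+1"
  shows "(-1)^m * aseq k t m = bb k t m"
  using assms
proof (induction m rule: less_induct)
  case (less m)
  have "(-1)^m * aseq k t m = TT k t (Suc m) - (\<Sum>j<m. (-1)^j * aseq k t j * TT k t (m - j))"
    by (subst aseq.simps) (simp flip: mult.assoc power_mult_distrib)
  also have "(\<Sum>j<m. (-1)^j * aseq k t j * TT k t (m - j)) = (\<Sum>j<m. bb k t j * TT k t (m - j))"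
    by (rule sum.cong) (use less in auto)
  also have "\<dots> = TT k t (Suc m) - bb k t m" using sum_id less by blast
  finally show ?case by simp
qed




definition cc :: "nat \<Rightarrow> real \<Rightarrow> nat \<Rightarrow> nat \<Rightarrow> real" where
  "cc k t i l = (if i \<le> l then bb k t (l-i) else if i = Suc l then -1 else 0)"

lemma decomp:
  assumes i: "i < n"
  shows "(\<Sum>l<n. cc k t i l * h l) = h i - (if 1 \<le> i then h (i-1) else 0)
           + (\<Sum>q<(n - Suc k) - i. bb k t (Suc k + q) * h (i + Suc k + q))"
proof -
  have c: "cc k t i l * h l = (if l = i then h l else 0) - (if Suc l = i then h l else 0)
      + (if i + Suc k \<le> l then bb k t (l-i) * h l else 0)" for l
    by (auto simp: cc_def bb_def)
  have s1: "(\<Sum>l<n. (if l = i then h l else 0)) = h i" using i by simp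
  have s2: "(\<Sum>l<n. (if Suc l = i then h l else 0)) = (if 1 \<le> i then h (i-1) else 0)"
  proof (cases i)
    case 0 then show ?thesis by simp
  next
    case (Suc i') then show ?thesis using i
      by (simp add: sum.delta'[where a=i', unfolded eq_commute[of i']] )
  qed
  have s3: "(\<Sum>l<n. (if i + Suc k \<le> l then bb k t (l-i) * h l else 0)) = (\<Sum>q<(n - Suc k) - i. bb k t (Suc k + q) * h (i + Suc k + q))"
  proof (cases "i + Suc k \<le> n")
    case True
    then obtain r where n: "n = (i + Suc k) + r" using le_Suc_ex by blast
    have "(\<Sum>l<n. (if i + Suc k \<le> l then bb k t (l-i) * h l else 0)) =
       (\<Sum>l<i + Suc k. (if i + Suc k \<le> l then bb k t (l-i) * h l else 0)) + (\<Sum>q<r. (if i + Suc k \<le> i + Suc k + q then bb k t (i + Suc k + q - i) * h (i + Suc k + q) else 0))"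
      unfolding n by (rule sum_split_add)
    also have "\<dots> = (\<Sum>q<r. bb k t (Suc k + q) * h (i + Suc k + q))" by simp
    finally show ?thesis using n by (simp add: add.commute add.left_commute)
  next
    case False
    then show ?thesis by (auto intro!: sum.neutral)
  qed
  show ?thesis unfolding c sum.distrib sum_subtractf s1 s2 s3 by simp
qed




lemma ex_add_Suc: "(a::nat) < b \<Longrightarrow> \<exists>r. b = Suc a + r" using less_imp_Suc_add by auto
lemma ex_add: "(a::nat) \<le> b \<Longrightarrow> \<exists>r. b = a + r" using le_Suc_ex by auto

definition gg :: "nat \<Rightarrow> nat \<Rightarrow> real \<Rightarrow> nat \<Rightarrow> nat \<Rightarrow> real" where
"gg k n t i j = (if i < Suc k then
   (if j < Suc k then t^(n - Suc k) * (if j \<le> i then 1 else 0) + t^((n - Suc k) - min (Suc i) (n - Suc k)) - t^(n - Suc k)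
    else if j - Suc k \<le> i then t^((n - Suc k) + (j - Suc k) - min (Suc i) (n - Suc k)) - t^(n - Suc k) else 0)
  else (if j < Suc k then 1 else t^(n - Suc k) * (if j \<le> i then 1 else 0) + t^(j - Suc k) - t^(n - Suc k)))"

lemma main_id:
  assumes nle: "n \<le> 2*k+2" and i: "i < n" and j: "j < n"
  shows "(\<Sum>l<n. cc k t i l * gg k n t l j) = (if i = j then t^(n - Suc k) else 0)"
proof -
  define m where "m = n - Suc k"
  have mk: "m \<le> Suc k" using nle unfolding m_def by simp
  have nm: "n = Suc k + m \<or> (n \<le> Suc k \<and> m = 0)" unfolding m_def by auto
  note dec = decomp[OF i, of k t "\<lambda>l. gg k n t l j", folded m_def]
  let ?S = "(\<Sum>q<m - i. bb k t (Suc k + q) * gg k n t (i + Suc k + q) j)"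
  show ?thesis
  proof (cases "Suc k \<le> i")
    case True
    have S: "?S = 0" using True mk by simp
    have i1: "1 \<le> i" using True by simp
    have "gg k n t i j - gg k n t (i - 1) j = (if i = j then t^m else 0)"
    proof (cases "i = Suc k")
      case True
      have mm: "min (Suc k) m = m" using mk by simp
      show ?thesis
      proof (cases "j < Suc k")
        case True
        then show ?thesis using `i = Suc k` mm by (simp add: gg_def m_def[symmetric])
      next
        case False
        have "j - Suc k \<le> k" using j nle by simp
        then show ?thesis using `i = Suc k` mm False by (auto simp add: gg_def m_def[symmetric])
      qed
    next
      case False
      then show ?thesis using `Suc k \<le> i` by (auto simp add: gg_def m_def[symmetric])
    qed
    then show ?thesis using dec S i1 by (simp add: m_def)
  next
    case False
    hence ip: "i < Suc k" by simp
    show ?thesis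
    proof (cases "j < Suc k")
      case True
      have "?S = (\<Sum>q<m - i. bb k t (Suc k + q))"
        by (rule sum.cong) (use True in \<open>auto simp: gg_def\<close>)
      also have "\<dots> = (if m - i = 0 then 0 else -(1-t)*t^(m - i - 1))" by (rule F_sum)
      finally have S: "?S = \<dots>" .
      have "gg k n t i j - (if 1 \<le> i then gg k n t (i - 1) j else 0) + ?S = (if i = j then t^m else 0)"
      proof (cases "m \<le> i")
        case True
        have mm: "min (Suc i) m = m" "min i m = m" using True by auto
        show ?thesis
        proof (cases "i = 0")
          case True
          then show ?thesis using `m \<le> i` S ip `j < Suc k` by (auto simp: gg_def m_def[symmetric])
        next
          case False
          then show ?thesis using `m \<le> i` mm S ip `j < Suc k` by (auto simp: gg_def m_def[symmetric])
        qed
      next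
        case False
        then obtain r where m: "m = Suc i + r" using ex_add_Suc[of i m] by auto
        show ?thesis
        proof (cases "i = 0")
          case True
          then show ?thesis using S ip `j < Suc k` m by (auto simp: gg_def m_def[symmetric] algebra_simps)
        next
          case False
          then obtain i' where i': "i = Suc i'" by (cases i) auto
          have e1: "m - min (Suc i) m = r" "m - min (Suc i') m = Suc r" "m - i - 1 = r" using m i' by auto
          show ?thesis using S ip `j < Suc k` m i' e1 by (auto simp: gg_def m_def[symmetric] algebra_simps)
        qed
      qed
      then show ?thesis using dec by (simp add: m_def)
    next
      case False
      then obtain j' where jj: "j = Suc k + j'" using ex_add[of "Suc k" j] by auto
      have j'm: "j' < m" using j jj unfolding m_def by simp
      have g2: "gg k n t (i + Suc k + q) j = t^m * (if j' \<le> i + q then 1 else 0) + t^j' - t^m" for q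
        using jj by (auto simp: gg_def m_def[symmetric])
      have "?S = (\<Sum>q<m - i. bb k t (Suc k + q) * (t^m * (if j' \<le> i + q then 1 else 0) + t^j' - t^m))"
        using g2 by simp
      have "gg k n t i j - (if 1 \<le> i then gg k n t (i - 1) j else 0) + ?S = 0"
      proof (cases "m \<le> i")
        case True
        have S: "?S = 0" using True by simp
        have mm: "min (Suc i) m = m" "min i m = m" using True by auto
        have "1 \<le> i" using True j'm by simp
        then show ?thesis using S mm ip jj j'm True by (auto simp: gg_def m_def[symmetric])
      next
        case False
        then obtain r where m: "m = Suc i + r" using ex_add_Suc[of i m] by auto
        show ?thesis
        proof (cases "j' \<le> i")
          case True
          have "?S = (\<Sum>q<m - i. bb k t (Suc k + q) * t^j')"
            by (rule sum.cong) (use g2 True in auto)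
          also have "\<dots> = (\<Sum>q<m - i. bb k t (Suc k + q)) * t^j'" by (simp add: sum_distrib_right)
          also have "\<dots> = -(1-t)*t^r * t^j'" using m F_sum[of k t "m - i"] by simp
          finally have S: "?S = -(1-t)*t^r * t^j'" .
          have e: "m + j' - min (Suc i) m = r + j'" using m by simp
          have gi: "gg k n t i j = t^(r+j') - t^m" using e ip jj True by (simp add: gg_def m_def[symmetric])
          show ?thesis
          proof (cases "i = 0")
            case True
            have "m = Suc r" "j' = 0" using m True `j' \<le> i` by auto
            then show ?thesis unfolding S gi using True by (simp add: algebra_simps)
          next
            case False
            then obtain i' where i': "i = Suc i'" by (cases i) auto
            show ?thesis
            proof (cases "j' \<le> i'")
              case True
              have e2: "m + j' - min (Suc i') m = Suc (r + j')" "m + j' - Suc i' = Suc (r + j')" using m i' True by auto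
              have gi1: "gg k n t (i - 1) j = t^(Suc (r + j')) - t^m"
                using e2 ip jj i' True by (simp add: gg_def m_def[symmetric])
              show ?thesis unfolding S gi using gi1 i' by (simp add: algebra_simps power_add)
            next
              case False
              hence "j' = i" using `j' \<le> i` i' by simp
              have gi1: "gg k n t (i - 1) j = 0"
                using ip jj i' `j' = i` by (simp add: gg_def m_def[symmetric])
              have "m = Suc i + r" by (rule m)
              then show ?thesis unfolding S gi using gi1 i' `j' = i` by (simp add: algebra_simps power_add)
            qed
          qed
        next
          case False
          then obtain s where js: "j' = Suc i + s" using ex_add_Suc[of i j'] by auto
          obtain u where mu: "m - i = Suc s + u" using ex_add[of "Suc s" "m - i"] j'm js m by auto
          have "?S = (\<Sum>q<Suc s + u. bb k t (Suc k + q) * (t^m * (if j' \<le> i + q then 1 else 0) + t^j' - t^m))"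
            using g2 mu by simp
          also have "\<dots> = (\<Sum>q<Suc s. bb k t (Suc k + q) * (t^m * (if j' \<le> i + q then 1 else 0) + t^j' - t^m))
             + (\<Sum>q<u. bb k t (Suc k + (Suc s + q)) * (t^m * (if j' \<le> i + (Suc s + q) then 1 else 0) + t^j' - t^m))"
            by (rule sum_split_add)
          also have "(\<Sum>q<Suc s. bb k t (Suc k + q) * (t^m * (if j' \<le> i + q then 1 else 0) + t^j' - t^m))
                = (\<Sum>q<Suc s. bb k t (Suc k + q)) * (t^j' - t^m)"
            unfolding sum_distrib_right by (rule sum.cong) (use js in auto)
          also have "(\<Sum>q<u. bb k t (Suc k + (Suc s + q)) * (t^m * (if j' \<le> i + (Suc s + q) then 1 else 0) + t^j' - t^m))
                = (\<Sum>q<u. bb k t (Suc k + (Suc s + q))) * t^j'"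
            unfolding sum_distrib_right by (rule sum.cong) (use js in auto)
          also have "(\<Sum>q<u. bb k t (Suc k + (Suc s + q))) = (\<Sum>q<Suc s + u. bb k t (Suc k + q)) - (\<Sum>q<Suc s. bb k t (Suc k + q))"
            by (subst sum_split_add) simp
          finally have S: "?S = (\<Sum>q<Suc s. bb k t (Suc k + q)) * (t ^ j' - t ^ m) +
              ((\<Sum>q<Suc s + u. bb k t (Suc k + q)) - (\<Sum>q<Suc s. bb k t (Suc k + q))) * t ^ j'" .
          have S2: "?S = -(1-t)*t^(s+u) * t^j' + (1-t)*t^s*t^m"
            unfolding S F_sum by (simp add: algebra_simps)
          have gi: "gg k n t i j = 0" using ip jj js by (simp add: gg_def)
          have gi1: "(if 1 \<le> i then gg k n t (i - 1) j else 0) = 0" using ip jj js by (auto simp add: gg_def)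
          have "m = i + Suc s + u" using mu m by simp
          then show ?thesis unfolding gi gi1 S2 using js by (simp add: power_add algebra_simps)
        qed
      qed
      then show ?thesis using dec jj ip by simp
    qed
  qed
qed




lemma gg_nonneg:
  assumes nle: "n \<le> 2*k+2" and i: "i < n" and j: "j < n" and t0: "0 < t" and t1: "t < 1"
  shows "0 \<le> gg k n t i j"
proof -
  define m where "m = n - Suc k"
  have pm: "t^m \<le> t^e" if "e \<le> m" for e using power_decreasing[OF that, of t] t0 t1 by simp
  have p1: "0 \<le> t^(m - min (Suc i) m) - t^m" using pm[of "m - min (Suc i) m"] by simp
  have p2: "j - Suc k \<le> i \<Longrightarrow> 0 \<le> t^(m + (j - Suc k) - min (Suc i) m) - t^m"
  proof -
    assume a: "j - Suc k \<le> i"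
    have "m + (j - Suc k) - min (Suc i) m \<le> m" using a j unfolding m_def by auto
    thus ?thesis using pm[of "m + (j - Suc k) - min (Suc i) m"] by simp
  qed
  have p3: "\<not> j < Suc k \<Longrightarrow> 0 \<le> t^(j - Suc k) - t^m"
    using pm[of "j - Suc k"] j unfolding m_def by simp
  have tm: "0 \<le> t^m" using t0 by simp
  show ?thesis
    unfolding gg_def m_def[symmetric]
  proof (cases "i < Suc k"; cases "j < Suc k"; cases "j \<le> i")
  qed (use p1 p2 p3 tm in \<open>simp_all add: add_diff_eq[symmetric]\<close>)
qed

lemma sign_swap: "(-1::real)^(l+j) = (-1)^(i+j) * (-1)^(i+l)"
proof -
  have "(-1::real)^(i+j) * (-1)^(i+l) = (-1)^(l+j) * ((-1)^i * (-1)^i)"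
    by (simp add: power_add)
  also have "(-1::real)^i * (-1)^i = 1" by (simp flip: power_add)
  finally show ?thesis by simp
qed

lemma A_cc:
  assumes nle: "n \<le> 2*k+2" and i: "i < n" and l: "l < n"
  shows "(-1)^(i+l) * A_nkt n k t $$ (i,l) = cc k t i l"
proof -
  have "(-1::real)^(i+l) * aseq k t (l - i) = bb k t (l - i)" if "i \<le> l"
  proof -
    have e: "i + l = (l - i) + 2 * i" using that by simp
    have "(-1::real)^(i+l) = (-1)^(l-i)" by (simp only: e power_add power_mult) simp
    thus ?thesis using aseq_val[of "l-i" k t] nle l by simp
  qed
  moreover have "(-1::real)^(Suc l + l) = -1"
  proof -
    have "Suc l + l = Suc (2*l)" by simp
    thus ?thesis by (simp only: power_Suc power_mult) simp
  qed
  ultimately show ?thesis using i l unfolding A_nkt_def seq_akt_eq by (auto simp: cc_def)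
qed

definition B0 :: "nat \<Rightarrow> nat \<Rightarrow> real \<Rightarrow> real mat" where
  "B0 k n t = mat n n (\<lambda>(i,j). (-1)^(i+j) * gg k n t i j / t^(n - Suc k))"

lemma AB0:
  assumes nle: "n \<le> 2*k+2" and t0: "0 < t"
  shows "A_nkt n k t * B0 k n t = 1\<^sub>m n"
proof (rule eq_matI)
  show "dim_row (A_nkt n k t * B0 k n t) = dim_row (1\<^sub>m n)" by (simp add: A_nkt_def)
  show "dim_col (A_nkt n k t * B0 k n t) = dim_col (1\<^sub>m n)" by (simp add: B0_def)
  fix i j assume i: "i < dim_row (1\<^sub>m n)" and j: "j < dim_col (1\<^sub>m n)"
  hence i: "i < n" and j: "j < n" by auto
  have "(A_nkt n k t * B0 k n t) $$ (i,j) = (\<Sum>l<n. A_nkt n k t $$ (i,l) * ((-1)^(l+j) * gg k n t l j / t^(n - Suc k)))"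
    using i j by (simp add: A_nkt_def B0_def scalar_prod_def times_mat_def lessThan_atLeast0)
  also have "\<dots> = (\<Sum>l<n. ((-1)^(i+j) / t^(n - Suc k)) * (((-1)^(i+l) * A_nkt n k t $$ (i,l)) * gg k n t l j))"
  proof (rule sum.cong)
    fix l
    show "A_nkt n k t $$ (i,l) * ((-1)^(l+j) * gg k n t l j / t^(n - Suc k)) = ((-1)^(i+j) / t^(n - Suc k)) * (((-1)^(i+l) * A_nkt n k t $$ (i,l)) * gg k n t l j)"
      by (subst sign_swap[of l j i]) (simp add: divide_inverse mult_ac)
  qed simp
  also have "\<dots> = ((-1)^(i+j) / t^(n - Suc k)) * (\<Sum>l<n. cc k t i l * gg k n t l j)"
    unfolding sum_distrib_left by (rule sum.cong) (simp_all add: A_cc[OF nle i])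
  also have "\<dots> = 1\<^sub>m n $$ (i,j)"
    unfolding main_id[OF nle i j] using i j t0 by auto
  finally show "(A_nkt n k t * B0 k n t) $$ (i,j) = 1\<^sub>m n $$ (i,j)" .
qed

theorem proposition4:
  fixes k n :: nat and t :: real
  assumes "k \<ge> 1" and "n \<ge> 1" and "0 < t" and "t < 1" and "n \<le> 2 * k + 2"
  shows "\<forall>B \<in> carrier_mat n n. inverts_mat (A_nkt n k t) B \<and> inverts_mat B (A_nkt n k t) \<longrightarrow>
           (\<forall>i<n. \<forall>j<n. B $$ (i, j) = 0 \<or> sgn (B $$ (i, j)) = (-1) ^ (i + j))"
proof (intro ballI impI allI)
  fix B i j assume B: "B \<in> carrier_mat n n"
    and inv: "inverts_mat (A_nkt n k t) B \<and> inverts_mat B (A_nkt n k t)"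
    and i: "i < n" and j: "j < n"
  have A: "A_nkt n k t \<in> carrier_mat n n" by (simp add: A_nkt_def)
  have B0c: "B0 k n t \<in> carrier_mat n n" by (simp add: B0_def)
  have BA: "B * A_nkt n k t = 1\<^sub>m n" using inv B unfolding inverts_mat_def by simp
  have "B = B * (A_nkt n k t * B0 k n t)" using AB0[OF assms(5) assms(3)] B by simp
  also have "\<dots> = (B * A_nkt n k t) * B0 k n t" using assoc_mult_mat[OF B A B0c] by simp
  also have "\<dots> = B0 k n t" using BA B0c by simp
  finally have BB: "B $$ (i,j) = (-1)^(i+j) * gg k n t i j / t^(n - Suc k)"
    using i j by (simp add: B0_def)
  have g: "0 \<le> gg k n t i j" using gg_nonneg[OF assms(5) i j assms(3) assms(4)] .
  show "B $$ (i, j) = 0 \<or> sgn (B $$ (i, j)) = (-1) ^ (i + j)"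
  proof (cases "gg k n t i j = 0")
    case True then show ?thesis using BB by simp
  next
    case False
    hence gp: "0 < gg k n t i j / t^(n - Suc k)" using g assms(3) by simp
    have "sgn (B $$ (i,j)) = sgn ((-1::real)^(i+j)) * sgn (gg k n t i j / t^(n - Suc k))"
      unfolding BB by (simp add: sgn_mult mult.assoc)
    also have "sgn ((-1::real)^(i+j)) = (-1)^(i+j)" by (cases "even (i+j)") simp_all
    also have "sgn (gg k n t i j / t^(n - Suc k)) = 1" using gp by (simp only: sgn_pos)
    finally show ?thesis by simp
  qed
qed


end
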